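(* Let $K$ be a field of characteristic $\neq2$, $\zeta_4$ a primitive fourth root of unity in a fixed algebraic closure of $K$, and let $a,b\in K^*$ with $a/b\in(K^* )^2$. Choose fourth roots of $a$ and $b$ and let $a,b:G_K\to\mathbb Z/4$ be the corresponding Kummer cocycles (via $\zeta_4$). Then $\binom a2+\binom b2:G_K\to\mathbb Z/2$ equals the cocycle $\{\sqrt b/\sqrt a\}:G_K\to\mathbb Z/2$, where $\sqrt b,\sqrt a$ are the squares of the chosen fourth roots of $b,a$.
   Context: The Kummer cocycle of $a$ is $g\mapsto a(g)$ with $g(\sqrt[4]a)/\sqrt[4]a=\zeta_4^{a(g)}$; $\binom a2$ is $g\mapsto\binom{a(g)}2\bmod2$ (well defined for $a(g)\in\mathbb Z/4$). For $z\in K^*$, $\{z\}:G_K\to\mathbb Z/2$ is the mod-$2$ Kummer cocycle $g\mapsto g(\sqrt z)/\sqrt z\in\mu_2=\mathbb Z/2$. *)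

theory Defs
  imports "HOL-Computational_Algebra.Polynomial"
begin

definition is_subfield :: "'a::field set \<Rightarrow> bool" where
  "is_subfield K \<longleftrightarrow> 0 \<in> K \<and> 1 \<in> K \<and>
     (\<forall>x\<in>K. \<forall>y\<in>K. x + y \<in> K \<and> x * y \<in> K) \<and>
     (\<forall>x\<in>K. - x \<in> K \<and> inverse x \<in> K)"

definition is_algebraic_closure_of :: "'a::field set \<Rightarrow> bool" where
  "is_algebraic_closure_of K \<longleftrightarrow>
     (\<forall>p::'a poly. degree p > 0 \<longrightarrow> (\<exists>x. poly p x = 0)) \<and>
     (\<forall>x::'a. \<exists>p. p \<noteq> 0 \<and> (\<forall>i. coeff p i \<in> K) \<and> poly p x = 0)"

text \<open>Elements of the absolute Galois group G_K, viewed as the K-automorphisms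
  of the fixed algebraic closure.\<close>
definition galois_elem :: "'a::field set \<Rightarrow> ('a \<Rightarrow> 'a) \<Rightarrow> bool" where
  "galois_elem K g \<longleftrightarrow> bij g \<and> (\<forall>x y. g (x + y) = g x + g y) \<and>
     (\<forall>x y. g (x * y) = g x * g y) \<and> (\<forall>x\<in>K. g x = x)"

definition primitive_4th_root :: "'a::field \<Rightarrow> bool" where
  "primitive_4th_root z \<longleftrightarrow> z ^ 4 = 1 \<and> (\<forall>k::nat. 0 < k \<and> k < 4 \<longrightarrow> z ^ k \<noteq> 1)"

text \<open>Mod-4 Kummer cocycle of a chosen fourth root \<alpha>: g(\<alpha>)/\<alpha> = \<zeta>^(value), value in Z/4 = {0..3}.\<close>
definition kummer4 :: "'a::field \<Rightarrow> 'a \<Rightarrow> ('a \<Rightarrow> 'a) \<Rightarrow> nat" where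
  "kummer4 \<zeta> \<alpha> g = (THE k. k < 4 \<and> g \<alpha> / \<alpha> = \<zeta> ^ k)"

definition binom2_mod2 :: "nat \<Rightarrow> nat" where
  "binom2_mod2 k = (k choose 2) mod 2"

text \<open>Mod-2 Kummer cocycle {z}: g \<mapsto> g(sqrt z)/sqrt z in mu_2 = Z/2 (0 for +1, 1 for -1).\<close>
definition kummer2 :: "'a::field \<Rightarrow> ('a \<Rightarrow> 'a) \<Rightarrow> nat" where
  "kummer2 z g = (let s = (SOME s. s ^ 2 = z) in if g s = s then 0 else 1)"

end

theory Submission
  imports Defs
begin

lemma gal_basic:
  assumes "galois_elem K g" "is_subfield K"
  shows "g 1 = 1" "g 0 = 0" "\<And>x n. g (x ^ n) = g x ^ n"
    "\<And>x y. g (x * y) = g x * g y"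
    "\<And>x. g (- x) = - g x"
    "\<And>x y. y \<noteq> 0 \<Longrightarrow> g (x / y) = g x / g y"
    "\<And>x. x \<in> K \<Longrightarrow> g x = x"
proof -
  have m: "\<And>x y. g (x * y) = g x * g y" and a: "\<And>x y. g (x + y) = g x + g y"
    and k: "\<And>x. x \<in> K \<Longrightarrow> g x = x" and bj: "bij g"
    using assms unfolding galois_elem_def by auto
  show g1: "g 1 = 1" using assms(2) k unfolding is_subfield_def by auto
  show g0: "g 0 = 0" using assms(2) k unfolding is_subfield_def by auto
  show "\<And>x n. g (x ^ n) = g x ^ n"
  proof -
    fix x n show "g (x ^ n) = g x ^ n" by (induct n) (auto simp: g1 m)
  qed
  show "\<And>x y. g (x * y) = g x * g y" by (rule m)
  show gn: "\<And>x. g (- x) = - g x"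
  proof -
    fix x have "g (-x) + g x = 0" using a[of "-x" x] g0 by simp
    thus "g (- x) = - g x" by (simp add: eq_neg_iff_add_eq_0)
  qed
  show "\<And>x y. y \<noteq> 0 \<Longrightarrow> g (x / y) = g x / g y"
  proof -
    fix x y :: 'a assume y: "y \<noteq> 0"
    have "g y * g (inverse y) = 1" using m[of y "inverse y"] y g1 by simp
    hence "g (inverse y) = inverse (g y)" by (metis inverse_unique)
    thus "g (x / y) = g x / g y" by (simp add: divide_inverse m)
  qed
  show "\<And>x. x \<in> K \<Longrightarrow> g x = x" by (rule k)
qed

theorem lemma12p6:
  fixes K :: "'a::field set" and \<zeta> a b \<alpha> \<beta> :: 'a
  assumes "is_subfield K"
    and "is_algebraic_closure_of K"
    and "(2::'a) \<noteq> 0"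
    and "primitive_4th_root \<zeta>"
    and "a \<in> K" "b \<in> K" "a \<noteq> 0" "b \<noteq> 0"
    and "\<exists>c\<in>K. c \<noteq> 0 \<and> a / b = c ^ 2"
    and "\<alpha> ^ 4 = a" "\<beta> ^ 4 = b"
  shows "\<forall>g. galois_elem K g \<longrightarrow>
    (binom2_mod2 (kummer4 \<zeta> \<alpha> g) + binom2_mod2 (kummer4 \<zeta> \<beta> g)) mod 2
      = kummer2 (\<beta> ^ 2 / \<alpha> ^ 2) g"
proof (intro allI impI)
  fix g assume G: "galois_elem K g"
  note gb = gal_basic[OF G assms(1)]
  have z4: "\<zeta>^4 = 1" and z1: "\<zeta> \<noteq> 1" and zz: "\<zeta>^2 \<noteq> 1" and z3: "\<zeta>^3 \<noteq> 1"
    using assms(4) unfolding primitive_4th_root_def by auto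
  have two: "(1::'a) \<noteq> -1"
  proof
    assume "(1::'a) = -1" hence "(1::'a) + 1 = 0" by simp
    thus False using assms(3) by simp
  qed
  have "(\<zeta>^2 - 1) * (\<zeta>^2 + 1) = 0" using z4 by (simp add: algebra_simps power2_eq_square power4_eq_xxxx)
  hence zsq: "\<zeta>^2 = -1" using zz by (simp add: eq_neg_iff_add_eq_0)
  have zc: "\<zeta>^3 = - \<zeta>" using zsq by (metis mult_minus1 power3_eq_cube power2_eq_square mult.assoc mult.commute)
  have z0: "\<zeta> \<noteq> 0" using zsq two by auto
  have zn1: "\<zeta> \<noteq> -1" using zsq two by auto
  have zneg: "\<zeta> \<noteq> - \<zeta>" 
  proof
    assume "\<zeta> = - \<zeta>" hence "\<zeta> + \<zeta> = 0" by (simp only: eq_neg_iff_add_eq_0)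
    hence "2 * \<zeta> = 0" by (metis mult_2)
    thus False using z0 assms(3) by simp
  qed
  have four: "k = 0 \<or> k = 1 \<or> k = 2 \<or> k = 3" if "k < 4" for k :: nat using that by arith
  have roots: "x = 1 \<or> x = \<zeta> \<or> x = -1 \<or> x = -\<zeta>" if "x^4 = 1" for x :: 'a
  proof -
    have "(x - \<zeta>) * (x + \<zeta>) = x^2 - \<zeta>^2" by (simp add: algebra_simps power2_eq_square)
    hence e1: "(x - \<zeta>) * (x + \<zeta>) = x^2 + 1" using zsq by simp
    have "(x - 1) * (x + 1) * (x - \<zeta>) * (x + \<zeta>) = (x - 1) * (x + 1) * ((x - \<zeta>) * (x + \<zeta>))"
      by (simp only: mult.assoc)
    also have "\<dots> = (x - 1) * (x + 1) * (x^2 + 1)" using e1 by simp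
    also have "\<dots> = x^4 - 1" by (simp add: algebra_simps power2_eq_square power4_eq_xxxx)
    finally have "(x - 1) * (x + 1) * (x - \<zeta>) * (x + \<zeta>) = x^4 - 1" .
    hence "(x - 1) * (x + 1) * (x - \<zeta>) * (x + \<zeta>) = 0" using that by simp
    thus ?thesis by (auto simp: eq_neg_iff_add_eq_0)
  qed
  have uq: "k1 = k2" if "k1 < 4" "k2 < 4" "\<zeta>^k1 = \<zeta>^k2" for k1 k2 :: nat
  proof -
    have d: "(1::'a) \<noteq> \<zeta>" "(1::'a) \<noteq> -\<zeta>" "\<zeta> \<noteq> -1" "-1 \<noteq> -\<zeta>"
      using z1 zn1 by (auto simp: eq_neg_iff_add_eq_0 add.commute)
    note dd = d d[symmetric] two two[symmetric] zneg zneg[symmetric]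
    have p: "\<zeta>^0 = 1" "\<zeta>^1 = \<zeta>" "\<zeta>^2 = -1" "\<zeta>^3 = -\<zeta>" using zsq zc by simp_all
    show ?thesis
      using four[OF that(1)] four[OF that(2)] that(3)
      by (elim disjE; simp add: p dd)
  qed
  have kum: "kummer4 \<zeta> x g < 4 \<and> g x / x = \<zeta> ^ kummer4 \<zeta> x g"
    if "x \<noteq> 0" "x^4 \<in> K" for x
  proof -
    have "g (x^4) = x^4" using gb(7) that by simp
    hence "(g x / x)^4 = 1" using gb(3) that by (simp add: power_divide)
    hence ex: "\<exists>k. k < 4 \<and> g x / x = \<zeta> ^ k"

    proof -
      have "g x / x = \<zeta>^0 \<or> g x / x = \<zeta>^1 \<or> g x / x = \<zeta>^2 \<or> g x / x = \<zeta>^3"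
        using roots[OF \<open>(g x / x)^4 = 1\<close>] by (simp only: power_0 power_one_right zsq zc)
      thus ?thesis
        apply (elim disjE)
           apply (rule exI[of _ 0], rule conjI, simp, assumption)
          apply (rule exI[of _ 1], rule conjI, simp, assumption)
         apply (rule exI[of _ 2], rule conjI, simp, assumption)
        apply (rule exI[of _ 3], rule conjI, simp, assumption)
        done
    qed
    obtain k where k: "k < 4" "g x / x = \<zeta> ^ k" using ex by blast
    have th: "(THE k. k < 4 \<and> g x / x = \<zeta> ^ k) = k"
    proof (rule the_equality)
      show "k < 4 \<and> g x / x = \<zeta> ^ k" using k by blast
      fix k' assume "k' < 4 \<and> g x / x = \<zeta> ^ k'"
      thus "k' = k" using uq[of k' k] k by metis
    qed
    show ?thesis unfolding kummer4_def th using k by blast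
  qed
  have a0: "\<alpha> \<noteq> 0" using assms(7,10) by auto
  have b0: "\<beta> \<noteq> 0" using assms(8,11) by auto
  define i where "i = kummer4 \<zeta> \<alpha> g"
  define j where "j = kummer4 \<zeta> \<beta> g"
  have ki: "i < 4" "g \<alpha> = \<zeta>^i * \<alpha>" using kum[OF a0] assms(5,10) a0 unfolding i_def
    by (auto simp: field_simps)
  have kj: "j < 4" "g \<beta> = \<zeta>^j * \<beta>" using kum[OF b0] assms(6,11) b0 unfolding j_def
    by (auto simp: field_simps)
  define r where "r = \<beta> / \<alpha>"
  have r0: "r \<noteq> 0" using a0 b0 r_def by auto
  have gr: "g r = (\<zeta>^j / \<zeta>^i) * r" using gb(6)[OF a0, of \<beta>] ki kj z0 a0
    unfolding r_def by (simp add: field_simps)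
  obtain c where c: "c \<in> K" "c \<noteq> 0" "a / b = c^2" using assms(9) by blast
  have ab: "a = b * c^2" using c(3) assms(8) by (simp add: field_simps)
  have "(r^2 * c)^2 = \<beta>^4 * c^2 / \<alpha>^4" unfolding r_def
    by (simp add: power_mult_distrib power_divide power_mult[symmetric])
  also have "\<dots> = 1" using ab assms(7,10,11) by simp
  finally have "(r^2 * c)^2 = 1" .
  hence "r^2 * c = 1 \<or> r^2 * c = -1" by (simp add: power2_eq_1_iff)
  hence "r^2 = inverse c \<or> r^2 = - inverse c" using c(2) by (auto simp: field_simps)
  hence r2K: "r^2 \<in> K" using assms(1) c(1) unfolding is_subfield_def by auto
  have "(g r)^2 = r^2" using gb(3)[of r 2] gb(7)[OF r2K] by simp
  hence par: "(\<zeta>^j)^2 = (\<zeta>^i)^2" using gr r0 z0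
    by (simp add: power_mult_distrib power_divide field_simps)
  have k2: "kummer2 (\<beta> ^ 2 / \<alpha> ^ 2) g = (if \<zeta>^j = \<zeta>^i then 0 else 1)"
  proof -
    define s where "s = (SOME s. s ^ 2 = \<beta> ^ 2 / \<alpha> ^ 2)"
    have "s^2 = \<beta> ^ 2 / \<alpha> ^ 2" unfolding s_def
      by (rule someI[of _ r]) (simp add: r_def power_divide)
    hence "s^2 = r^2" by (simp add: r_def power_divide)
    hence sr: "s = r \<or> s = - r" by (simp add: power2_eq_iff)
    have "(g s = s) = (\<zeta>^j = \<zeta>^i)"
      using sr gr gb(5) r0 z0 by (auto simp: field_simps)
    thus ?thesis unfolding kummer2_def Let_def s_def[symmetric] by simp
  qed
  have ij: "(\<zeta>^j = \<zeta>^i) = (i = j)" using uq[OF ki(1) kj(1)] by auto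
  have sqk: "(\<zeta>^k)^2 = (-1)^k" for k :: nat
    by (metis zsq power_mult mult.commute)
  have "(-1::'a)^j = (-1)^i" using par by (simp only: sqk)
  hence pe: "even i = even j" using two by (auto simp: minus_one_power_iff split: if_splits)
  show "(binom2_mod2 i + binom2_mod2 j) mod 2 = kummer2 (\<beta> ^ 2 / \<alpha> ^ 2) g"
    unfolding k2 binom2_mod2_def ij using four[OF ki(1)] four[OF kj(1)] pe
    by (elim disjE) (simp_all add: choose_two)
qed

end
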